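(* Let $(R,\Lambda,S)$ be a generalised Renner–Coxeter system, $e,f\in\Lambda$ and $w\in\mathrm{Red}(e,f)$. (i) There exists $h\in\Lambda$ such that $w\in W(h)$ and $ewf=wh$. (ii) For such $h$, $w\in W_\star(h)$; therefore $wh=h$.
   Context: For a monoid $R$, $E(R)$ is its set of idempotents, $G(R)$ its unit group. $R$ is factorisable if $R=E(R)G(R)=G(R)E(R)$ and idempotents commute; then $E(R)$ is a semilattice ($e\le f\iff ef=fe=e$) on which $G(R)$ acts by conjugation. For $e\in E(R)$, $W(e)=\{w\in G(R)\mid we=ew\}$, $W_\star(e)=\{w\mid we=ew=e\}$. For a Coxeter system $(W,S)$, $W_I$ is the subgroup generated by $I\subseteq S$. A generalised Renner–Coxeter system is a triple $(R,\Lambda,S)$ with: (ECS1) $R$ factorisable; (ECS2) $\Lambda\subseteq E(R)$ contains exactly one element of each $G(R)$-orbit and is closed under multiplication; (ECS3) $(G(R),S)$ is a Coxeter system; (ECS4) for $e_1\le e_2$ in $E(R)$ there are $w\in G(R)$, $f_1\le f_2$ in $\Lambda$ with $wf_iw^{-1}=e_i$; (ECS5) for $e\in\Lambda$, $W(e)$, $W_\star(e)$ are of the form $W_I$; (ECS6) with $\lambda^\star(e)=\{s\in S\mid se=es\ne e\}$, $e\le f$ in $\Lambda$ implies $\lambda^\star(e)\subseteq\lambda^\star(f)$. Let $\lambda(e)\subseteq S$ with $W(e)=W_{\lambda(e)}$, $W=G(R)$. $\mathrm{Red}(e,f)$ is the set of $w\in W$ which are of minimal Coxeter length in the double coset $W_{\lambda(e)}wW_{\lambda(f)}$.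 *)

theory Defs
  imports Main
begin

text \<open>The monoid R is modelled as a type of class monoid_mult (R = UNIV).\<close>

definition units_of_monoid :: "'a::monoid_mult set" ("G\<^sub>R") where
  "units_of_monoid = {u. \<exists>v. u * v = 1 \<and> v * u = 1}"

definition minv :: "'a::monoid_mult \<Rightarrow> 'a" where
  "minv u = (THE v. u * v = 1 \<and> v * u = 1)"

definition idems :: "'a::monoid_mult set" ("E\<^sub>R") where
  "idems = {e. e * e = e}"

definition factorisable :: "'a::monoid_mult itself \<Rightarrow> bool" where
  "factorisable _ \<longleftrightarrow>
     (UNIV :: 'a set) = {e * g | e g. e \<in> idems \<and> g \<in> units_of_monoid} \<and>
     (UNIV :: 'a set) = {g * e | e g. e \<in> idems \<and> g \<in> units_of_monoid} \<and>
     (\<forall>e\<in>(idems :: 'a set). \<forall>f\<in>idems. e * f = f * e)"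

definition ileq :: "'a::monoid_mult \<Rightarrow> 'a \<Rightarrow> bool" where
  "ileq e f \<longleftrightarrow> e * f = e \<and> f * e = e"

text \<open>Coxeter systems: S consists of involutions generating the unit group, and the
  unit group is presented (as a monoid, hence as a group) by the relators
  (s t)^m(s,t), s,t in S, with m(s,t) the order of s t (m(s,s) = 1 gives s s = 1).\<close>

definition coxeter_relator :: "'a::monoid_mult set \<Rightarrow> 'a list \<Rightarrow> bool" where
  "coxeter_relator S r \<longleftrightarrow> (\<exists>s\<in>S. \<exists>t\<in>S. \<exists>m::nat. 0 < m \<and> (s * t) ^ m = 1 \<and>
      (\<forall>k. 0 < k \<and> k < m \<longrightarrow> (s * t) ^ k \<noteq> 1) \<and> r = concat (replicate m [s, t]))"

inductive coxeter_cong :: "'a::monoid_mult set \<Rightarrow> 'a list \<Rightarrow> 'a list \<Rightarrow> bool"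
  for S :: "'a set" where
  refl: "coxeter_cong S u u"
| sym: "coxeter_cong S u v \<Longrightarrow> coxeter_cong S v u"
| trans: "coxeter_cong S u v \<Longrightarrow> coxeter_cong S v w \<Longrightarrow> coxeter_cong S u w"
| ins: "coxeter_relator S r \<Longrightarrow> coxeter_cong S (xs @ ys) (xs @ r @ ys)"

definition coxeter_system :: "'a::monoid_mult set \<Rightarrow> bool" where
  "coxeter_system S \<longleftrightarrow>
     S \<subseteq> units_of_monoid \<and>
     (\<forall>s\<in>S. s \<noteq> 1 \<and> s * s = 1) \<and>
     units_of_monoid = {prod_list xs | xs. xs \<in> lists S} \<and>
     (\<forall>u\<in>lists S. \<forall>v\<in>lists S. prod_list u = prod_list v \<longrightarrow> coxeter_cong S u v)"

definition WI :: "'a::monoid_mult set \<Rightarrow> 'a set" where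
  "WI I = {prod_list xs | xs. xs \<in> lists I}"

definition cox_len :: "'a::monoid_mult set \<Rightarrow> 'a \<Rightarrow> nat" where
  "cox_len S w = (LEAST n. \<exists>xs\<in>lists S. length xs = n \<and> prod_list xs = w)"

definition Wc :: "'a::monoid_mult \<Rightarrow> 'a set" where
  "Wc e = {w \<in> units_of_monoid. w * e = e * w}"

definition Wstar :: "'a::monoid_mult \<Rightarrow> 'a set" where
  "Wstar e = {w \<in> units_of_monoid. w * e = e \<and> e * w = e}"

definition lambda_star :: "'a::monoid_mult set \<Rightarrow> 'a \<Rightarrow> 'a set" where
  "lambda_star S e = {s \<in> S. s * e = e * s \<and> s * e \<noteq> e}"

definition gen_renner_coxeter :: "'a::monoid_mult set \<Rightarrow> 'a set \<Rightarrow> bool" where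
  "gen_renner_coxeter \<Lambda> S \<longleftrightarrow>
     factorisable TYPE('a) \<and>
     \<Lambda> \<subseteq> idems \<and>
     (\<forall>e\<in>idems. \<exists>!f. f \<in> \<Lambda> \<and> (\<exists>w\<in>units_of_monoid. w * f * minv w = e)) \<and>
     (\<forall>e\<in>\<Lambda>. \<forall>f\<in>\<Lambda>. e * f \<in> \<Lambda>) \<and>
     coxeter_system S \<and>
     (\<forall>e1\<in>idems. \<forall>e2\<in>idems. ileq e1 e2 \<longrightarrow>
        (\<exists>w\<in>units_of_monoid. \<exists>f1\<in>\<Lambda>. \<exists>f2\<in>\<Lambda>. ileq f1 f2 \<and>
           w * f1 * minv w = e1 \<and> w * f2 * minv w = e2)) \<and>
     (\<forall>e\<in>\<Lambda>. (\<exists>I\<subseteq>S. Wc e = WI I) \<and> (\<exists>I\<subseteq>S. Wstar e = WI I)) \<and>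
     (\<forall>e\<in>\<Lambda>. \<forall>f\<in>\<Lambda>. ileq e f \<longrightarrow> lambda_star S e \<subseteq> lambda_star S f)"

text \<open>lambda(e): the subset I of S with W(e) = W_I (unique in a Coxeter system).\<close>
definition lam :: "'a::monoid_mult set \<Rightarrow> 'a \<Rightarrow> 'a set" where
  "lam S e = (SOME I. I \<subseteq> S \<and> Wc e = WI I)"

definition Red :: "'a::monoid_mult set \<Rightarrow> 'a \<Rightarrow> 'a \<Rightarrow> 'a set" where
  "Red S e f = {w \<in> units_of_monoid.
     \<forall>x\<in>WI (lam S e). \<forall>y\<in>WI (lam S f). cox_len S w \<le> cox_len S (x * w * y)}"

end

theory Submission
  imports Defs "HOL-Library.Sublist"
begin

lemma units_mult: "u \<in> G\<^sub>R \<Longrightarrow> v \<in> G\<^sub>R \<Longrightarrow> u * v \<in> (G\<^sub>R :: 'a::monoid_mult set)"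
  unfolding units_of_monoid_def
proof clarsimp
  fix a b assume "u * a = 1" "a * u = 1" "v * b = 1" "b * v = 1"
  then have "(u * v) * (b * a) = 1 \<and> (b * a) * (u * v) = 1"
    by (metis mult.assoc mult_1_left)
  then show "\<exists>w. u * v * w = 1 \<and> w * (u * v) = 1" by blast
qed

lemma minv: assumes "u \<in> (G\<^sub>R :: 'a::monoid_mult set)"
  shows "u * minv u = 1" "minv u * u = 1"
proof -
  obtain v where v: "u * v = 1" "v * u = 1" using assms unfolding units_of_monoid_def by blast
  have "minv u = v" unfolding minv_def
  proof (rule the_equality)
    fix x assume "u * x = 1 \<and> x * u = 1"
    then show "x = v" by (metis v mult.assoc mult_1_left mult_1_right)
  qed (use v in auto)
  then show "u * minv u = 1" "minv u * u = 1" using v by auto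
qed

lemma minv_l: "u \<in> G\<^sub>R \<Longrightarrow> minv u * (u * z) = (z::'a::monoid_mult)"
  by (simp add: minv(2) mult.assoc[symmetric])

lemma minv_r: "u \<in> G\<^sub>R \<Longrightarrow> u * (minv u * z) = (z::'a::monoid_mult)"
  by (simp add: minv(1) mult.assoc[symmetric])

lemma minv_units: "u \<in> G\<^sub>R \<Longrightarrow> minv u \<in> (G\<^sub>R :: 'a::monoid_mult set)"
  using minv unfolding units_of_monoid_def by blast

lemma one_units: "1 \<in> (G\<^sub>R :: 'a::monoid_mult set)"
  unfolding units_of_monoid_def by auto

lemma minv_one: "minv (1::'a::monoid_mult) = 1"
  using minv(1)[OF one_units] by simp

lemma cancel_left: "u \<in> G\<^sub>R \<Longrightarrow> u * a = u * b \<Longrightarrow> a = (b::'a::monoid_mult)"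
  by (metis minv(2) mult.assoc mult_1_left)

lemma cancel_right: "u \<in> G\<^sub>R \<Longrightarrow> a * u = b * u \<Longrightarrow> a = (b::'a::monoid_mult)"
  by (metis minv(1) mult.assoc mult_1_right)

locale cox =
  fixes S :: "'a::monoid_mult set"
  assumes cs: "coxeter_system S"
begin

lemma S_units: "S \<subseteq> G\<^sub>R" using cs unfolding coxeter_system_def by blast
lemma S_inv: "s \<in> S \<Longrightarrow> s * s = 1" using cs unfolding coxeter_system_def by blast
lemma S_ne1: "s \<in> S \<Longrightarrow> s \<noteq> 1" using cs unfolding coxeter_system_def by blast
lemma units_eq: "G\<^sub>R = {prod_list xs | xs. xs \<in> lists S}" using cs unfolding coxeter_system_def by blast
lemma cong: "u \<in> lists S \<Longrightarrow> v \<in> lists S \<Longrightarrow> prod_list u = prod_list v \<Longrightarrow> coxeter_cong S u v"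
  using cs unfolding coxeter_system_def by blast

lemma prod_rev: "xs \<in> lists S \<Longrightarrow> prod_list xs * prod_list (rev xs) = 1 \<and> prod_list (rev xs) * prod_list xs = 1"
proof (induction xs)
  case (Cons x xs)
  then have x: "x * x = 1" using S_inv by auto
  from Cons have ih: "prod_list xs * prod_list (rev xs) = 1" "prod_list (rev xs) * prod_list xs = 1" by auto
  have "x * prod_list xs * (prod_list (rev xs) * x) = 1"
    by (metis ih(1) x mult.assoc mult_1_left)
  moreover have "prod_list (rev xs) * x * (x * prod_list xs) = 1"
    by (metis ih(2) x mult.assoc mult_1_left)
  ultimately show ?case by (simp add: mult.assoc)
qed simp

lemma prod_units: "xs \<in> lists S \<Longrightarrow> prod_list xs \<in> G\<^sub>R"
  using units_eq by blast

lemma minv_prod: "xs \<in> lists S \<Longrightarrow> minv (prod_list xs) = prod_list (rev xs)"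
  by (metis cancel_left minv(1) prod_rev prod_units)

end

definition tj :: "'a::monoid_mult list \<Rightarrow> nat \<Rightarrow> 'a" where
  "tj xs j = prod_list (take j xs) * xs!j * prod_list (rev (take j xs))"

definition cnt :: "'a::monoid_mult list \<Rightarrow> 'a \<Rightarrow> nat" where
  "cnt xs t = card {j. j < length xs \<and> tj xs j = t}"

lemma tj_app1: "j < length A \<Longrightarrow> tj (A @ B) j = tj A j"
  by (simp add: tj_def nth_append)

lemma tj_app2: "tj (A @ B) (length A + i) = prod_list A * tj B i * prod_list (rev A)"
  by (simp add: tj_def nth_append mult.assoc)

lemma tj_Cons0: "tj (x # xs) 0 = x" by (simp add: tj_def)
lemma tj_Cons: "tj (x # xs) (Suc j) = x * tj xs j * x"
  by (simp add: tj_def mult.assoc)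

context cox begin

lemma conj_iff: assumes "A \<in> lists S"
  shows "(prod_list A * y * prod_list (rev A) = t) \<longleftrightarrow> (y = prod_list (rev A) * t * prod_list A)"
proof -
  have r: "prod_list A * prod_list (rev A) = 1" "prod_list (rev A) * prod_list A = 1"
    using prod_rev[OF assms] by auto
  show ?thesis
  proof
    assume "prod_list A * y * prod_list (rev A) = t"
    then have "prod_list (rev A) * t * prod_list A = (prod_list (rev A) * prod_list A) * y * (prod_list (rev A) * prod_list A)"
      by (metis mult.assoc)
    then show "y = prod_list (rev A) * t * prod_list A" using r by simp
  next
    assume "y = prod_list (rev A) * t * prod_list A"
    then have "prod_list A * y * prod_list (rev A) = (prod_list A * prod_list (rev A)) * t * (prod_list A * prod_list (rev A))"
      by (metis mult.assoc)
    then show "prod_list A * y * prod_list (rev A) = t" using r by simp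
  qed
qed

lemma cnt_append: assumes "A \<in> lists S"
  shows "cnt (A @ B) t = cnt A t + cnt B (prod_list (rev A) * t * prod_list A)"
proof -
  let ?t' = "prod_list (rev A) * t * prod_list A"
  have eq: "{j. j < length (A @ B) \<and> tj (A @ B) j = t} =
     {j. j < length A \<and> tj A j = t} \<union> (\<lambda>i. length A + i) ` {i. i < length B \<and> tj B i = ?t'}"
  proof (rule set_eqI)
    fix j
    show "j \<in> {j. j < length (A @ B) \<and> tj (A @ B) j = t} \<longleftrightarrow>
      j \<in> {j. j < length A \<and> tj A j = t} \<union> (\<lambda>i. length A + i) ` {i. i < length B \<and> tj B i = ?t'}"
    proof (cases "j < length A")
      case True then show ?thesis by (auto simp: tj_app1)
    next
      case False
      then obtain i where j: "j = length A + i" by (metis add_diff_inverse_nat)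
      show ?thesis using False unfolding j by (auto simp: tj_app2 conj_iff[OF assms])
    qed
  qed
  have "card ({j. j < length A \<and> tj A j = t} \<union> (\<lambda>i. length A + i) ` {i. i < length B \<and> tj B i = ?t'})
     = card {j. j < length A \<and> tj A j = t} + card ((\<lambda>i. length A + i) ` {i. i < length B \<and> tj B i = ?t'})"
    by (rule card_Un_disjoint) auto
  also have "card ((\<lambda>i. length A + i) ` {i. i < length B \<and> tj B i = ?t'}) = card {i. i < length B \<and> tj B i = ?t'}"
    by (rule card_image) (auto simp: inj_on_def)
  finally show ?thesis unfolding cnt_def eq .
qed

lemma tj_alt: "j < 2 * n \<Longrightarrow> tj (concat (replicate n [s, t])) j = (s * t) ^ j * s"
proof (induction n arbitrary: j)
  case 0 then show ?case by simp
next
  case (Suc n)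
  have L: "concat (replicate (Suc n) [s, t]) = s # t # concat (replicate n [s, t])" by simp
  consider "j = 0" | "j = 1" | j' where "j = Suc (Suc j')" by (metis One_nat_def not0_implies_Suc)
  then show ?case
  proof cases
    case 1 then show ?thesis by (simp add: L tj_Cons0)
  next
    case 2 then show ?thesis by (simp add: L tj_Cons tj_Cons0 mult.assoc)
  next
    case 3
    then have "j' < 2 * n" using Suc.prems by simp
    then have ih: "tj (concat (replicate n [s, t])) j' = (s * t) ^ j' * s" by (rule Suc.IH)
    have "(s * t) ^ Suc (Suc j') * s = (s * t) * ((s * t) ^ j' * (s * t)) * s"
      by (simp add: power_commutes mult.assoc)
    then show ?thesis unfolding 3 L tj_Cons ih by (simp add: mult.assoc)
  qed
qed

lemma cnt_relator_even: assumes "coxeter_relator S r" shows "even (cnt r x)"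
proof -
  obtain s t m where st: "s \<in> S" "t \<in> S" "(s * t) ^ m = (1::'a)" and r: "r = concat (replicate m [s, t])"
    using assms unfolding coxeter_relator_def by blast
  have len: "length r = 2 * m" unfolding r by (simp add: length_concat sum_list_replicate)
  let ?P = "\<lambda>j. (s * t) ^ j * s = x"
  have per: "?P (m + i) \<longleftrightarrow> ?P i" for i
    using st(3) by (simp add: power_add)
  have "{j. j < length r \<and> tj r j = x} = {j. j < 2 * m \<and> ?P j}"
    using tj_alt[of _ m s t] len unfolding r by auto
  also have "\<dots> = {j. j < m \<and> ?P j} \<union> (\<lambda>i. m + i) ` {j. j < m \<and> ?P j}"
  proof (rule set_eqI)
    fix j show "j \<in> {j. j < 2 * m \<and> ?P j} \<longleftrightarrow> j \<in> {j. j < m \<and> ?P j} \<union> (\<lambda>i. m + i) ` {j. j < m \<and> ?P j}"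
    proof (cases "j < m")
      case True then show ?thesis by auto
    next
      case False
      then obtain i where j: "j = m + i" by (metis add_diff_inverse_nat)
      show ?thesis unfolding j using per[of i] False by auto
    qed
  qed
  finally have "cnt r x = card ({j. j < m \<and> ?P j} \<union> (\<lambda>i. m + i) ` {j. j < m \<and> ?P j})"
    unfolding cnt_def by simp
  also have "\<dots> = card {j. j < m \<and> ?P j} + card ((\<lambda>i. m + i) ` {j. j < m \<and> ?P j})"
    by (rule card_Un_disjoint) auto
  also have "card ((\<lambda>i. m + i) ` {j. j < m \<and> ?P j}) = card {j. j < m \<and> ?P j}"
    by (rule card_image) (auto simp: inj_on_def)
  finally show ?thesis by simp
qed

lemma relator_lists: "coxeter_relator S r \<Longrightarrow> r \<in> lists S"
  unfolding coxeter_relator_def by auto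

lemma relator_prod: "coxeter_relator S r \<Longrightarrow> prod_list r = 1"
proof -
  assume "coxeter_relator S r"
  then obtain s t m where st: "(s * t) ^ m = (1::'a)" and r: "r = concat (replicate m [s, t])"
    unfolding coxeter_relator_def by blast
  have "prod_list (concat (replicate m [s, t])) = (s * t) ^ m" for m
    by (induction m) (simp_all add: mult.assoc)
  then show ?thesis using st r by simp
qed

definition par :: "'a list \<Rightarrow> 'a \<Rightarrow> bool" where
  "par xs t = odd (cnt (filter (\<lambda>x. x \<in> S) xs) t)"

lemma par_ins: assumes "coxeter_relator S r"
  shows "par (xs @ r @ ys) = par (xs @ ys)"
proof
  fix t
  let ?A = "filter (\<lambda>x. x \<in> S) xs" and ?B = "filter (\<lambda>x. x \<in> S) ys"
  have rS: "r \<in> lists S" using relator_lists[OF assms] .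
  then have fr: "filter (\<lambda>x. x \<in> S) r = r" by (induction r) auto
  have AS: "?A \<in> lists S" by auto
  have pr: "prod_list r = 1" "prod_list (rev r) = 1"
    using relator_prod[OF assms] prod_rev[OF rS] by auto
  have "cnt (?A @ r @ ?B) t = cnt ?A t + (cnt r (prod_list (rev ?A) * t * prod_list ?A)
      + cnt ?B (prod_list (rev r) * (prod_list (rev ?A) * t * prod_list ?A) * prod_list r))"
    using cnt_append[OF AS] cnt_append[OF rS] by simp
  moreover have "cnt (?A @ ?B) t = cnt ?A t + cnt ?B (prod_list (rev ?A) * t * prod_list ?A)"
    using cnt_append[OF AS] by simp
  moreover have "even (cnt r (prod_list (rev ?A) * t * prod_list ?A))" by (rule cnt_relator_even[OF assms])
  ultimately show "par (xs @ r @ ys) t = par (xs @ ys) t"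
    unfolding par_def using fr pr by simp
qed

lemma par_cong: "coxeter_cong S u v \<Longrightarrow> par u = par v"
  by (induction rule: coxeter_cong.induct) (auto simp: par_ins)

lemma par_eq: "u \<in> lists S \<Longrightarrow> v \<in> lists S \<Longrightarrow> prod_list u = prod_list v \<Longrightarrow>
   odd (cnt u t) = odd (cnt v t)"
proof -
  assume a: "u \<in> lists S" "v \<in> lists S" "prod_list u = prod_list v"
  have "par u = par v" using par_cong[OF cong[OF a]] .
  moreover have "filter (\<lambda>x. x \<in> S) u = u" "filter (\<lambda>x. x \<in> S) v = v"
    using a(1,2) by (auto simp: filter_id_conv)
  ultimately show ?thesis unfolding par_def by metis
qed

end


context cox begin

lemma cox_len_le: "xs \<in> lists S \<Longrightarrow> cox_len S (prod_list xs) \<le> length xs"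
  unfolding cox_len_def by (rule Least_le) blast

lemma cox_len_ex: assumes "w \<in> G\<^sub>R"
  shows "\<exists>xs\<in>lists S. length xs = cox_len S w \<and> prod_list xs = w"
proof -
  have "w \<in> {prod_list xs | xs. xs \<in> lists S}" using assms units_eq by simp
  then obtain xs where xs: "xs \<in> lists S" "prod_list xs = w" by blast
  define P where "P = (\<lambda>n. \<exists>xs\<in>lists S. length xs = n \<and> prod_list xs = w)"
  have "P (length xs)" unfolding P_def using xs by blast
  then have "P (LEAST n. P n)" by (rule LeastI)
  then show ?thesis unfolding cox_len_def P_def .
qed

lemma del_core: assumes "a \<in> S" "B \<in> lists S"
  and "a = a * prod_list B * b * prod_list (rev B) * a"
shows "a * prod_list B * b = prod_list B"
proof -
  have aa: "a * a = 1" using S_inv assms(1) by simp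
  have aa': "a * (a * z) = z" for z using aa by (simp add: mult.assoc[symmetric])
  have r: "prod_list (rev B) * prod_list B = 1" using prod_rev[OF assms(2)] by simp
  define X where "X = prod_list B * b * prod_list (rev B)"
  have "a * prod_list B * b * prod_list (rev B) * a = a * X * a" unfolding X_def by (simp add: mult.assoc)
  with assms(3) have h: "a = a * X * a" by (rule HOL.trans)
  have "a * a = a * (a * X * a)" using h by (rule arg_cong)
  then have "1 = X * a" using aa aa' by (simp add: mult.assoc)
  then have "1 * a = X * a * a" by simp
  then have Xa: "a = X" using aa by (simp add: mult.assoc)
  have "prod_list B * b = prod_list B * b * (prod_list (rev B) * prod_list B)" using r by simp
  also have "\<dots> = X * prod_list B" unfolding X_def by (simp add: mult.assoc)
  also have "\<dots> = a * prod_list B" using Xa by simp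
  finally have "a * (prod_list B * b) = a * (a * prod_list B)" by simp
  then show ?thesis using aa' by (simp add: mult.assoc)
qed

lemma split2: assumes "i < j" "j < length xs"
  shows "xs = take i xs @ xs!i # take (j - Suc i) (drop (Suc i) xs) @ xs!j # drop (Suc j) xs"
proof -
  let ?D = "drop (Suc i) xs" let ?k = "j - Suc i"
  have k: "?k < length ?D" using assms by simp
  have "take ?k ?D @ ?D!?k # drop (Suc ?k) ?D = ?D" using id_take_nth_drop[OF k] by simp
  moreover have "?D!?k = xs!j" using assms by simp
  moreover have "drop (Suc ?k) ?D = drop (Suc j) xs" using assms by simp
  ultimately have e1: "take ?k ?D @ xs!j # drop (Suc j) xs = ?D" by simp
  have e2: "take i xs @ xs!i # ?D = xs" using assms id_take_nth_drop[of i xs] by simp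
  show ?thesis by (simp only: e1 e2)
qed

lemma deletion: assumes xs: "xs \<in> lists S" and ys: "ys \<in> lists S"
  and eq: "prod_list xs = prod_list ys" and lt: "length ys < length xs"
shows "\<exists>zs. subseq zs xs \<and> length zs < length xs \<and> prod_list zs = prod_list xs"
proof -
  have ninj: "\<not> inj_on (tj xs) {..<length xs}"
  proof
    assume inj: "inj_on (tj xs) {..<length xs}"
    have "tj xs ` {..<length xs} \<subseteq> tj ys ` {..<length ys}"
    proof
      fix t assume "t \<in> tj xs ` {..<length xs}"
      then obtain j where j: "j < length xs" "tj xs j = t" by auto
      have "{k. k < length xs \<and> tj xs k = t} = {j}"
        using inj j unfolding inj_on_def by auto
      then have "odd (cnt xs t)" unfolding cnt_def by simp
      then have "odd (cnt ys t)" using par_eq[OF xs ys eq] by simp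
      then have "{k. k < length ys \<and> tj ys k = t} \<noteq> {}" unfolding cnt_def by (metis card.empty even_zero)
      then show "t \<in> tj ys ` {..<length ys}" by auto
    qed
    then have "card (tj xs ` {..<length xs}) \<le> card (tj ys ` {..<length ys})"
      by (rule card_mono[rotated]) simp
    also have "\<dots> \<le> length ys" using card_image_le[of "{..<length ys}" "tj ys"] by simp
    finally show False using card_image[OF inj] lt by simp
  qed
  then obtain i j where ij0: "i \<in> {..<length xs}" "j \<in> {..<length xs}" "tj xs i = tj xs j" "i \<noteq> j"
    unfolding inj_on_def by blast
  then have ij: "i < length xs" "j < length xs" "i \<noteq> j" "tj xs i = tj xs j" by auto
  obtain i' j' where ij': "i' < j'" "j' < length xs" "tj xs i' = tj xs j'"
  proof (cases "i < j")
    case True then show ?thesis using that ij by blast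
  next
    case False then show ?thesis using that[of j i] ij by auto
  qed
  define A where "A = take i' xs" define a where "a = xs!i'"
  define B where "B = take (j' - Suc i') (drop (Suc i') xs)" define b where "b = xs!j'"
  define C where "C = drop (Suc j') xs"
  have dec: "xs = A @ a # B @ b # C" unfolding A_def a_def B_def b_def C_def using split2[OF ij'(1,2)] .
  have lA: "length A = i'" unfolding A_def using ij' by simp
  have lB: "length B = j' - Suc i'" unfolding B_def using ij' by simp
  have S': "A \<in> lists S" "a \<in> S" "B \<in> lists S" "b \<in> S" "C \<in> lists S" using xs dec by auto
  have t1: "tj xs i' = prod_list A * a * prod_list (rev A)"
    using tj_app2[of A "a # B @ b # C" 0] unfolding dec[symmetric] lA by (simp add: tj_Cons0)
  have "tj (a # B @ b # C) (Suc (length B)) = a * (prod_list B * b * prod_list (rev B)) * a"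
    using tj_app2[of B "b # C" 0] by (simp add: tj_Cons tj_Cons0)
  then have t2: "tj xs j' = prod_list A * (a * (prod_list B * b * prod_list (rev B)) * a) * prod_list (rev A)"
    using tj_app2[of A "a # B @ b # C" "Suc (length B)"] ij'(1) unfolding dec[symmetric] lA lB by simp
  have uA: "prod_list A \<in> G\<^sub>R" "prod_list (rev A) \<in> G\<^sub>R" using prod_units[of A] prod_units[of "rev A"] S'(1) by (auto simp: in_lists_conv_set)
  have "prod_list A * a * prod_list (rev A) = prod_list A * (a * (prod_list B * b * prod_list (rev B)) * a) * prod_list (rev A)"
    using ij'(3) t1 t2 by simp
  then have "prod_list A * (a * prod_list (rev A)) = prod_list A * ((a * (prod_list B * b * prod_list (rev B)) * a) * prod_list (rev A))"
    by (simp only: mult.assoc)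
  then have "a * prod_list (rev A) = (a * (prod_list B * b * prod_list (rev B)) * a) * prod_list (rev A)"
    by (rule cancel_left[OF uA(1)])
  then have "a = a * (prod_list B * b * prod_list (rev B)) * a"
    by (rule cancel_right[OF uA(2)])
  then have key: "a * prod_list B * b = prod_list B"
    using del_core[OF S'(2,3)] by (metis mult.assoc)
  let ?zs = "A @ B @ C"
  have "subseq (B @ C) (B @ b # C)" unfolding subseq_append' by (rule list_emb_Cons) (auto intro: list_emb_refl)
  then have "subseq (B @ C) (a # B @ b # C)" by (rule list_emb_Cons)
  then have "subseq ?zs xs" unfolding dec subseq_append' .
  moreover have "length ?zs < length xs" unfolding dec by simp
  moreover have "a * (prod_list B * (b * prod_list C)) = prod_list B * prod_list C"
    using key by (simp add: mult.assoc[symmetric])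
  then have "prod_list ?zs = prod_list xs" unfolding dec by simp
  ultimately show ?thesis by blast
qed

end


lemma subseq_set: "subseq ys xs \<Longrightarrow> set ys \<subseteq> set xs"
  by (induction rule: list_emb.induct) auto

lemma subseq_lists: assumes "subseq ys xs" "xs \<in> lists K" shows "ys \<in> lists K"
proof -
  have "set ys \<subseteq> set xs" using subseq_set[OF assms(1)] .
  moreover have "set xs \<subseteq> K" using assms(2) by (simp add: lists_eq_set)
  ultimately show ?thesis by (simp add: lists_eq_set)
qed

lemma WI_mult: assumes "x \<in> WI K" "y \<in> WI K" shows "x * y \<in> WI K"
proof -
  obtain xs where xs: "xs \<in> lists K" "x = prod_list xs" using assms(1) unfolding WI_def by blast
  obtain ys where ys: "ys \<in> lists K" "y = prod_list ys" using assms(2) unfolding WI_def by blast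
  have "x * y = prod_list (xs @ ys)" using xs ys by simp
  moreover have "xs @ ys \<in> lists K" using xs ys by simp
  ultimately show ?thesis unfolding WI_def by blast
qed

lemma WI_one: "1 \<in> WI K"
proof -
  have "1 = prod_list ([] :: 'a list)" by simp
  then show ?thesis unfolding WI_def by blast
qed

lemma WI_gen: assumes "s \<in> K" shows "s \<in> WI K"
proof -
  have "s = prod_list [s]" by simp
  moreover have "[s] \<in> lists K" using assms by simp
  ultimately show ?thesis unfolding WI_def by blast
qed

context cox begin

lemma WI_units: assumes "K \<subseteq> S" shows "WI K \<subseteq> G\<^sub>R"
proof
  fix x assume "x \<in> WI K"
  then obtain xs where "xs \<in> lists K" "x = prod_list xs" unfolding WI_def by blast
  then have "xs \<in> lists S" "x = prod_list xs" using assms lists_mono by auto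
  then show "x \<in> G\<^sub>R" using prod_units by simp
qed

lemma WI_minv: assumes "K \<subseteq> S" "x \<in> WI K" shows "minv x \<in> WI K"
proof -
  obtain xs where xs: "xs \<in> lists K" "x = prod_list xs" using assms(2) unfolding WI_def by blast
  then have "xs \<in> lists S" using assms(1) by blast
  then have "minv x = prod_list (rev xs)" using minv_prod xs by simp
  then show ?thesis unfolding WI_def using xs by auto
qed

lemma reduce: "xs \<in> lists S \<Longrightarrow> \<exists>ys. subseq ys xs \<and> prod_list ys = prod_list xs \<and> length ys = cox_len S (prod_list xs)"
proof (induction xs rule: length_induct)
  case (1 xs)
  show ?case
  proof (cases "length xs = cox_len S (prod_list xs)")
    case True then show ?thesis by (intro exI[of _ xs]) (auto intro: list_emb_refl)
  next
    case False
    then have lt: "cox_len S (prod_list xs) < length xs" using cox_len_le[OF "1.prems"] by simp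
    obtain ws where ws: "ws \<in> lists S" "length ws = cox_len S (prod_list xs)" "prod_list ws = prod_list xs"
      using cox_len_ex[OF prod_units[OF "1.prems"]] by blast
    obtain zs where zs: "subseq zs xs" "length zs < length xs" "prod_list zs = prod_list xs"
      using deletion[OF "1.prems" ws(1) ws(3)[symmetric]] ws(2) lt by auto
    have zS: "zs \<in> lists S" using subseq_lists[OF zs(1) "1.prems"] .
    obtain ys where ys: "subseq ys zs" "prod_list ys = prod_list zs" "length ys = cox_len S (prod_list zs)"
      using "1.IH" zs(2) zS by blast
    have "subseq ys xs" using ys(1) zs(1) by (rule subseq_order.order_trans)
    then show ?thesis using ys zs(3) by auto
  qed
qed

lemma reduce_K: assumes "K \<subseteq> S" "w \<in> WI K"
  shows "\<exists>ys\<in>lists K. prod_list ys = w \<and> length ys = cox_len S w"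
proof -
  obtain xs where xs: "xs \<in> lists K" "w = prod_list xs" using assms(2) unfolding WI_def by blast
  then have "xs \<in> lists S" using assms(1) by blast
  then obtain ys where ys: "subseq ys xs" "prod_list ys = prod_list xs" "length ys = cox_len S (prod_list xs)"
    using reduce by blast
  have "ys \<in> lists K" using subseq_lists[OF ys(1) xs(1)] .
  then show ?thesis using ys xs(2) by auto
qed

lemma cox_len_S: assumes "s \<in> S" shows "cox_len S s = 1"
proof -
  have "cox_len S s \<le> 1" using cox_len_le[of "[s]"] assms by simp
  moreover have "cox_len S s \<noteq> 0"
  proof
    assume "cox_len S s = 0"
    then obtain xs where "xs \<in> lists S" "length xs = 0" "prod_list xs = s"
      using cox_len_ex[of s] assms S_units by auto
    then show False using S_ne1[OF assms] by simp
  qed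
  ultimately show ?thesis by simp
qed

lemma in_K: assumes "K \<subseteq> S" "s \<in> S" "s \<in> WI K" shows "s \<in> K"
proof -
  obtain ys where "ys \<in> lists K" "prod_list ys = s" "length ys = 1"
    using reduce_K[OF assms(1,3)] cox_len_S[OF assms(2)] by auto
  then show ?thesis by (cases ys) auto
qed

lemma support: assumes "K \<subseteq> S" "xs \<in> lists S" "length xs = cox_len S (prod_list xs)" "prod_list xs \<in> WI K"
  shows "set xs \<subseteq> K"
  using assms(2-4)
proof (induction xs rule: list.induct)
  case Nil then show ?case by simp
next
  case (Cons x xs)
  let ?y = "prod_list (x # xs)"
  have xS: "x \<in> S" "xs \<in> lists S" using Cons.prems by auto
  have xx: "x * x = 1" using S_inv xS by simp
  have xy: "x * ?y = prod_list xs" using xx by (simp add: mult.assoc[symmetric])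
  have red: "length xs = cox_len S (prod_list xs)"
  proof -
    have "cox_len S (prod_list xs) \<le> length xs" using cox_len_le xS by simp
    moreover have "\<not> cox_len S (prod_list xs) < length xs"
    proof
      assume "cox_len S (prod_list xs) < length xs"
      obtain ws where "ws \<in> lists S" "length ws = cox_len S (prod_list xs)" "prod_list ws = prod_list xs"
        using cox_len_ex[OF prod_units[OF xS(2)]] by blast
      then have "cox_len S ?y \<le> length (x # ws)" "prod_list (x # ws) = ?y" using cox_len_le[of "x # ws"] xS by auto
      then show False using Cons.prems(2) \<open>cox_len S (prod_list xs) < length xs\<close> \<open>length ws = _\<close> by simp
    qed
    ultimately show ?thesis by simp
  qed
  obtain zs where zs: "zs \<in> lists K" "prod_list zs = ?y" "length zs = cox_len S ?y"
    using reduce_K[OF assms(1) Cons.prems(3)] by blast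
  have zS: "zs \<in> lists S" using zs(1) assms(1) by blast
  obtain ws where ws: "ws \<in> lists S" "length ws = cox_len S (prod_list xs)" "prod_list ws = prod_list xs"
    using cox_len_ex[OF prod_units[OF xS(2)]] by blast
  have "prod_list (x # zs) = prod_list ws" using xy zs(2) ws(3) by simp
  moreover have "length ws < length (x # zs)" using ws(2) red Cons.prems(2) zs(3) by simp
  ultimately obtain vs where vs: "subseq vs (x # zs)" "length vs < length (x # zs)" "prod_list vs = prod_list (x # zs)"
    using deletion[of "x # zs" ws] xS zS ws(1) by auto
  have xK: "x \<in> K"
  proof (cases "subseq vs zs")
    case True
    then have "prod_list vs \<in> WI K" using subseq_lists[OF True zs(1)] unfolding WI_def by blast
    moreover have "minv ?y \<in> WI K" using WI_minv[OF assms(1) Cons.prems(3)] .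
    ultimately have "prod_list vs * minv ?y \<in> WI K" by (rule WI_mult)
    moreover have "prod_list vs * minv ?y = x"
    proof -
      have u: "?y \<in> G\<^sub>R" using prod_units Cons.prems(1) by blast
      have "prod_list vs * minv ?y = x * (?y * minv ?y)" using vs(3) zs(2) by (simp add: mult.assoc)
      then show ?thesis using minv(1)[OF u] by simp
    qed
    ultimately have "x \<in> WI K" by simp
    then show ?thesis using in_K[OF assms(1) xS(1)] by simp
  next
    case False
    then obtain vs' where vs': "vs = x # vs'" "subseq vs' zs"
      using vs(1) by (cases vs) (auto split: if_splits)
    have "x * prod_list vs' = x * prod_list zs" using vs(3) vs' by simp
    then have "prod_list vs' = ?y" using cancel_left[of x "prod_list vs'" "prod_list zs"] xS(1) S_units zs(2) by auto
    moreover have "vs' \<in> lists S" using subseq_lists[OF vs'(2) zS] .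
    ultimately have "cox_len S ?y \<le> length vs'" using cox_len_le by metis
    then show ?thesis using vs(2) vs' zs(3) by simp
  qed
  then have "x * ?y \<in> WI K" using WI_mult[OF WI_gen[OF xK] Cons.prems(3)] by simp
  then have "set xs \<subseteq> K" using Cons.IH xS(2) red xy by simp
  then show ?case using xK by simp
qed

end


context cox begin

lemma lists_sub: "K \<subseteq> S \<Longrightarrow> xs \<in> lists K \<Longrightarrow> xs \<in> lists S"
  using lists_mono by blast

lemma prod_in_WI: "xs \<in> lists K \<Longrightarrow> prod_list xs \<in> WI K"
  unfolding WI_def by blast

lemma deodhar:
  assumes IS: "I \<subseteq> S" and JS: "J \<subseteq> S" and wG: "w \<in> G\<^sub>R"
    and mini: "\<forall>x\<in>WI I. \<forall>y\<in>WI J. cox_len S w \<le> cox_len S (x * w * y)"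
    and p0: "p0 \<in> WI I" and q0: "q0 \<in> WI J"
  shows "\<exists>P\<in>lists I. \<exists>Q\<in>lists J. \<exists>Wd\<in>lists S. prod_list Wd = w \<and>
           prod_list (P @ Wd @ Q) = p0 * w * q0 \<and> length (P @ Wd @ Q) = cox_len S (p0 * w * q0)"
proof -
  let ?z = "p0 * w * q0"
  define Pr where "Pr = (\<lambda>pq. fst pq \<in> WI I \<and> snd pq \<in> WI J \<and> ?z = fst pq * w * snd pq)"
  define m where "m = (\<lambda>pq. cox_len S (fst pq) + cox_len S (snd pq))"
  have "Pr (p0, q0)" unfolding Pr_def using p0 q0 by simp
  then obtain pq where pq: "Pr pq" "\<forall>y. Pr y \<longrightarrow> m pq \<le> m y"
    using ex_has_least_nat[of Pr "(p0, q0)" m] by blast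
  obtain p q where pq_eq: "pq = (p, q)" by (cases pq)
  have p: "p \<in> WI I" "q \<in> WI J" "?z = p * w * q" using pq(1) unfolding Pr_def pq_eq by auto
  have mn: "cox_len S p + cox_len S q \<le> cox_len S p' + cox_len S q'"
    if "p' \<in> WI I" "q' \<in> WI J" "?z = p' * w * q'" for p' q'
  proof -
    have "Pr (p', q')" unfolding Pr_def using that by simp
    then have "m pq \<le> m (p', q')" using pq(2) by blast
    then show ?thesis unfolding m_def pq_eq by simp
  qed
  obtain P where P: "P \<in> lists I" "prod_list P = p" "length P = cox_len S p"
    using reduce_K[OF IS p(1)] by blast
  obtain Q where Q: "Q \<in> lists J" "prod_list Q = q" "length Q = cox_len S q"
    using reduce_K[OF JS p(2)] by blast
  obtain Wd where Wd: "Wd \<in> lists S" "length Wd = cox_len S w" "prod_list Wd = w"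
    using cox_len_ex[OF wG] by blast
  have PS: "P \<in> lists S" using lists_sub[OF IS P(1)] .
  have QS: "Q \<in> lists S" using lists_sub[OF JS Q(1)] .
  let ?L = "P @ Wd @ Q"
  have LS: "?L \<in> lists S" using PS QS Wd(1) by simp
  have prodL': "prod_list ?L = p * w * q" using P(2) Q(2) Wd(3) by (simp add: mult.assoc)
  have prodL: "prod_list ?L = ?z" by (rule HOL.trans[OF prodL' p(3)[symmetric]])
  have le: "cox_len S ?z \<le> length ?L" using cox_len_le[OF LS] prodL by simp
  have "\<not> cox_len S ?z < length ?L"
  proof
    assume lt: "cox_len S ?z < length ?L"
    have zG: "?z \<in> G\<^sub>R" using prod_units[OF LS] prodL by simp
    obtain Rw where Rw: "Rw \<in> lists S" "length Rw = cox_len S ?z" "prod_list Rw = ?z"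
      using cox_len_ex[OF zG] by blast
    obtain zs where zs: "subseq zs ?L" "length zs < length ?L" "prod_list zs = prod_list ?L"
      using deletion[OF LS Rw(1)] Rw(2,3) prodL lt by auto
    obtain z1 z23 where z1: "zs = z1 @ z23" "subseq z1 P" "subseq z23 (Wd @ Q)"
      using zs(1) by (rule subseq_appendE)
    obtain z2 z3 where z2: "z23 = z2 @ z3" "subseq z2 Wd" "subseq z3 Q"
      using z1(3) by (rule subseq_appendE)
    have z1I: "z1 \<in> lists I" using subseq_lists[OF z1(2) P(1)] .
    have z3J: "z3 \<in> lists J" using subseq_lists[OF z2(3) Q(1)] .
    have z2S: "z2 \<in> lists S" using subseq_lists[OF z2(2) Wd(1)] .
    have z1S: "z1 \<in> lists S" using lists_sub[OF IS z1I] .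
    have z3S: "z3 \<in> lists S" using lists_sub[OF JS z3J] .
    define p' where "p' = prod_list z1"
    define w' where "w' = prod_list z2"
    define q' where "q' = prod_list z3"
    have p'I: "p' \<in> WI I" unfolding p'_def using prod_in_WI[OF z1I] .
    have q'J: "q' \<in> WI J" unfolding q'_def using prod_in_WI[OF z3J] .
    have p'G: "p' \<in> G\<^sub>R" unfolding p'_def using prod_units[OF z1S] .
    have q'G: "q' \<in> G\<^sub>R" unfolding q'_def using prod_units[OF z3S] .
    have zeq: "p' * w' * q' = ?z" using zs(3) prodL unfolding z1(1) z2(1) p'_def w'_def q'_def
      by (simp add: mult.assoc)
    have zeq2: "p' * w' * q' = p * w * q" using zeq p(3) by simp
    define x where "x = minv p' * p"
    define y where "y = q * minv q'"
    have xI: "x \<in> WI I" unfolding x_def by (rule WI_mult[OF WI_minv[OF IS p'I] p(1)])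
    have yJ: "y \<in> WI J" unfolding y_def by (rule WI_mult[OF p(2) WI_minv[OF JS q'J]])
    have "w' = minv p' * (p' * w' * q') * minv q'"
      using minv[OF p'G] minv[OF q'G] minv_l[OF p'G] by (simp add: mult.assoc)
    also have "\<dots> = minv p' * (p * w * q) * minv q'" using zeq2 by simp
    also have "\<dots> = x * w * y" unfolding x_def y_def by (simp add: mult.assoc)
    finally have w'eq: "w' = x * w * y" .
    have "cox_len S w \<le> cox_len S w'" using mini xI yJ w'eq by simp
    also have "\<dots> \<le> length z2" unfolding w'_def using cox_len_le[OF z2S] .
    finally have "cox_len S w \<le> length z2" .
    moreover have "length z2 \<le> length Wd" using list_emb_length[OF z2(2)] .
    ultimately have "length z2 = length Wd" using Wd(2) by simp
    then have "z2 = Wd" using subseq_same_length[OF z2(2)] by simp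
    then have "w' = w" unfolding w'_def using Wd(3) by simp
    then have "?z = p' * w * q'" using zeq by simp
    then have "cox_len S p + cox_len S q \<le> cox_len S p' + cox_len S q'" using mn p'I q'J by blast
    also have "\<dots> \<le> length z1 + length z3"
      using cox_len_le[OF z1S] cox_len_le[OF z3S] unfolding p'_def q'_def by simp
    finally have A1: "cox_len S p + cox_len S q \<le> length z1 + length z3" .
    have "length zs = length z1 + length Wd + length z3" using z1(1) z2(1) \<open>z2 = Wd\<close> by simp
    then show False using zs(2) A1 P(3) Q(3) by simp
  qed
  then have "length ?L = cox_len S ?z" using le by simp
  then show ?thesis using P(1) Q(1) Wd(1) Wd(3) prodL by blast
qed

end


lemma minv_minv: assumes "u \<in> G\<^sub>R" shows "minv (minv u) = (u::'a::monoid_mult)"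
proof -
  have "minv u * minv (minv u) = minv u * u" using minv[OF minv_units[OF assms]] minv[OF assms] by simp
  then show ?thesis by (rule cancel_left[OF minv_units[OF assms]])
qed

lemma minv_mult: assumes "u \<in> G\<^sub>R" "v \<in> G\<^sub>R" shows "minv (u * v) = minv v * (minv u::'a::monoid_mult)"
proof -
  have uv: "u * v \<in> G\<^sub>R" using units_mult[OF assms] .
  have "(u * v) * minv (u * v) = (u * v) * (minv v * minv u)"
    using minv[OF uv] minv_r[OF assms(2)] minv[OF assms(1)] by (simp add: mult.assoc)
  then show ?thesis by (rule cancel_left[OF uv])
qed

lemma conj_idem: assumes "u \<in> G\<^sub>R" "x \<in> E\<^sub>R" shows "u * x * minv u \<in> (E\<^sub>R::'a::monoid_mult set)"
proof -
  have xx: "x * x = x" using assms(2) unfolding idems_def by simp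
  have xx': "x * (x * z) = x * z" for z using xx by (simp add: mult.assoc[symmetric])
  show ?thesis unfolding idems_def using minv_l[OF assms(1)] xx' by (simp add: mult.assoc)
qed

lemma Wc_mult: "a \<in> Wc k \<Longrightarrow> b \<in> Wc k \<Longrightarrow> a * b \<in> Wc (k::'a::monoid_mult)"
  unfolding Wc_def by (auto simp: units_mult) (metis mult.assoc)

lemma Wc_minv: assumes "a \<in> Wc (k::'a::monoid_mult)" shows "minv a \<in> Wc k"
proof -
  have aG: "a \<in> G\<^sub>R" and ak: "a * k = k * a" using assms unfolding Wc_def by auto
  have "minv a * k = minv a * (k * a) * minv a" using minv[OF aG] by (simp add: mult.assoc)
  also have "\<dots> = minv a * (a * k) * minv a" using ak by simp
  also have "\<dots> = k * minv a" using minv_l[OF aG] by (simp add: mult.assoc)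
  finally show ?thesis unfolding Wc_def using minv_units[OF aG] by simp
qed

lemma Wstar_Wc: "a \<in> Wstar k \<Longrightarrow> a \<in> Wc k" unfolding Wstar_def Wc_def by auto

lemma Wstar_mult: "a \<in> Wstar k \<Longrightarrow> b \<in> Wstar k \<Longrightarrow> a * b \<in> Wstar (k::'a::monoid_mult)"
  unfolding Wstar_def by (auto simp: units_mult) (metis mult.assoc)+

lemma Wc_one: "1 \<in> Wc k" unfolding Wc_def using one_units by auto
lemma Wstar_one: "1 \<in> Wstar k" unfolding Wstar_def using one_units by auto

lemma ex1_eq: "\<exists>!x. P x \<Longrightarrow> P a \<Longrightarrow> P b \<Longrightarrow> a = b" by blast

lemma conj_comm: assumes "u \<in> G\<^sub>R" "y \<in> G\<^sub>R" "u * k * minv u = y * k * minv (y::'a::monoid_mult)"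
  shows "(minv u * y) * k = k * (minv u * y)"
proof -
  have "k * (minv u * y) = minv u * (u * k * minv u) * y" using minv_l[OF assms(1)] by (simp add: mult.assoc)
  also have "\<dots> = minv u * (y * k * minv y) * y" using assms(3) by simp
  also have "\<dots> = (minv u * y) * k" using minv[OF assms(2)] by (simp add: mult.assoc)
  finally show ?thesis by simp
qed

lemma decomp:
  assumes "\<forall>s\<in>set xs. s \<in> Wc e \<inter> Wc k \<or> s \<in> Wstar k"
  shows "\<exists>b a. prod_list xs = b * a \<and> b \<in> Wc e \<inter> Wc (k::'a::monoid_mult) \<and> a \<in> Wstar k"
  using assms
proof (induction xs rule: list.induct)
  case Nil then show ?case using Wc_one Wstar_one by (intro exI[of _ 1]) auto
next
  case (Cons s xs)
  then obtain b a where ba: "prod_list xs = b * a" "b \<in> Wc e \<inter> Wc k" "a \<in> Wstar k" by auto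
  have s: "s \<in> Wc e \<inter> Wc k \<or> s \<in> Wstar k" using Cons.prems by simp
  show ?case
  proof (cases "s \<in> Wc e \<inter> Wc k")
    case True
    have "prod_list (s # xs) = (s * b) * a" using ba(1) by (simp add: mult.assoc)
    moreover have "s * b \<in> Wc e \<inter> Wc k" using True ba(2) Wc_mult by blast
    ultimately show ?thesis using ba(3) by blast
  next
    case False
    then have sS: "s \<in> Wstar k" using s by blast
    have bG: "b \<in> G\<^sub>R" using ba(2) unfolding Wc_def by auto
    have bk: "b * k = k * b" using ba(2) unfolding Wc_def by auto
    have mbk: "minv b * k = k * minv b" using Wc_minv[of b k] ba(2) unfolding Wc_def by auto
    have sG: "s \<in> G\<^sub>R" and sk: "s * k = k" "k * s = k" using sS unfolding Wstar_def by auto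
    define c where "c = minv b * s * b"
    have cG: "c \<in> G\<^sub>R" unfolding c_def using units_mult minv_units bG sG by metis
    have "c * k = minv b * (s * k) * b" unfolding c_def using bk by (simp add: mult.assoc)
    also have "\<dots> = (minv b * k) * b" using sk(1) by simp
    also have "\<dots> = k * (minv b * b)" using mbk by (metis mult.assoc)
    also have "\<dots> = k" using minv(2)[OF bG] by simp
    finally have ck: "c * k = k" .
    have "k * c = minv b * (k * s) * b" unfolding c_def using mbk by (simp add: mult.assoc[symmetric])
    also have "\<dots> = (minv b * k) * b" using sk(2) by simp
    also have "\<dots> = k * (minv b * b)" using mbk by (metis mult.assoc)
    also have "\<dots> = k" using minv(2)[OF bG] by simp
    finally have kc: "k * c = k" .
    have cS: "c \<in> Wstar k" unfolding Wstar_def using cG ck kc by simp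
    have "prod_list (s # xs) = b * (c * a)" unfolding c_def using ba(1) minv_r[OF bG] by (simp add: mult.assoc)
    moreover have "c * a \<in> Wstar k" using Wstar_mult[OF cS ba(3)] .
    ultimately show ?thesis using ba(2) by blast
  qed
qed


theorem mainTheorem10:
  fixes \<Lambda> S :: "'a::monoid_mult set" and e f w :: 'a
  assumes "gen_renner_coxeter \<Lambda> S"
    and "e \<in> \<Lambda>" and "f \<in> \<Lambda>"
    and "w \<in> Red S e f"
  shows "(\<exists>h\<in>\<Lambda>. w \<in> Wc h \<and> e * w * f = w * h) \<and>
         (\<forall>h\<in>\<Lambda>. w \<in> Wc h \<and> e * w * f = w * h \<longrightarrow> w \<in> Wstar h \<and> w * h = h)"
proof -
  have fact: "factorisable TYPE('a)"
    using assms(1) unfolding gen_renner_coxeter_def by (elim conjE) assumption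
  have LI: "\<Lambda> \<subseteq> idems"
    using assms(1) unfolding gen_renner_coxeter_def by (elim conjE) assumption
  have orb: "\<forall>e\<in>idems. \<exists>!f. f \<in> \<Lambda> \<and> (\<exists>w\<in>units_of_monoid. w * f * minv w = e)"
    using assms(1) unfolding gen_renner_coxeter_def by (elim conjE) assumption
  have cs: "coxeter_system S"
    using assms(1) unfolding gen_renner_coxeter_def by (elim conjE) assumption
  have E4: "\<forall>e1\<in>idems. \<forall>e2\<in>idems. ileq e1 e2 \<longrightarrow>
        (\<exists>w\<in>units_of_monoid. \<exists>f1\<in>\<Lambda>. \<exists>f2\<in>\<Lambda>. ileq f1 f2 \<and>
           w * f1 * minv w = e1 \<and> w * f2 * minv w = e2)"
    using assms(1) unfolding gen_renner_coxeter_def by (elim conjE) assumption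
  have E5: "\<forall>e\<in>\<Lambda>. (\<exists>I\<subseteq>S. Wc e = WI I) \<and> (\<exists>I\<subseteq>S. Wstar e = WI I)"
    using assms(1) unfolding gen_renner_coxeter_def by (elim conjE) assumption
  have E6: "\<forall>e\<in>\<Lambda>. \<forall>f\<in>\<Lambda>. ileq e f \<longrightarrow> lambda_star S e \<subseteq> lambda_star S f"
    using assms(1) unfolding gen_renner_coxeter_def by (elim conjE) assumption
  have comm: "\<And>x y. x \<in> idems \<Longrightarrow> y \<in> (idems::'a set) \<Longrightarrow> x * y = y * x"
    using fact unfolding factorisable_def by blast
  interpret cox S by (rule cox.intro[OF cs])
  have eE: "e \<in> idems" and fE: "f \<in> idems" using LI assms(2,3) by auto
  have ee: "e * e = e" and ff: "f * f = f" using eE fE unfolding idems_def by auto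
  have wG: "w \<in> G\<^sub>R" using assms(4) unfolding Red_def by simp
  have mini: "\<forall>x\<in>WI (lam S e). \<forall>y\<in>WI (lam S f). cox_len S w \<le> cox_len S (x * w * y)"
    using assms(4) unfolding Red_def by simp
  define I where "I = lam S e"
  define J where "J = lam S f"
  have "\<exists>I. I \<subseteq> S \<and> Wc e = WI I" using E5 assms(2) by blast
  then have I: "I \<subseteq> S \<and> Wc e = WI I" unfolding I_def lam_def by (rule someI_ex)
  have "\<exists>I. I \<subseteq> S \<and> Wc f = WI I" using E5 assms(3) by blast
  then have J: "J \<subseteq> S \<and> Wc f = WI J" unfolding J_def lam_def by (rule someI_ex)
  have IS: "I \<subseteq> S" and WcI: "Wc e = WI I" using I by auto
  have JS: "J \<subseteq> S" and WcJ: "Wc f = WI J" using J by auto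
  have mini': "\<forall>x\<in>WI I. \<forall>y\<in>WI J. cox_len S w \<le> cox_len S (x * w * y)"
    using mini unfolding I_def J_def .
  define wi where "wi = minv w"
  have wiG: "wi \<in> G\<^sub>R" unfolding wi_def using minv_units[OF wG] .
  have mwi: "minv wi = w" unfolding wi_def using minv_minv[OF wG] .
  have wwi: "w * wi = 1" "wi * w = 1" unfolding wi_def using minv[OF wG] by auto
  define F where "F = w * f * wi"
  define g where "g = e * F"
  have wfE: "F \<in> idems" unfolding F_def wi_def using conj_idem[OF wG fE] .
  have FF: "F * F = F" using wfE unfolding idems_def by simp
  have c: "e * F = F * e" using comm[OF eE wfE] .
  have gE: "g \<in> idems"
  proof -
    have "g * g = e * (F * e) * F" unfolding g_def by (simp only: mult.assoc)
    also have "\<dots> = e * (e * F) * F" by (simp only: c)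
    also have "\<dots> = (e * e) * (F * F)" by (simp only: mult.assoc)
    also have "\<dots> = g" unfolding g_def by (simp only: ee FF)
    finally show ?thesis unfolding idems_def by simp
  qed
  have gle: "ileq g e"
  proof -
    have "g * e = e * (F * e)" unfolding g_def by (simp only: mult.assoc)
    also have "\<dots> = (e * e) * F" by (simp only: c[symmetric] mult.assoc)
    also have "\<dots> = g" unfolding g_def by (simp only: ee)
    finally have 1: "g * e = g" .
    have "e * g = (e * e) * F" unfolding g_def by (simp only: mult.assoc)
    also have "\<dots> = g" unfolding g_def by (simp only: ee)
    finally have 2: "e * g = g" .
    show ?thesis unfolding ileq_def using 1 2 by simp
  qed
  obtain u f1 f2 where u: "u \<in> G\<^sub>R" "f1 \<in> \<Lambda>" "f2 \<in> \<Lambda>" "ileq f1 f2"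
      "u * f1 * minv u = g" "u * f2 * minv u = e"
    using mp[OF bspec[OF bspec[OF E4 gE] eE] gle] by blast
  have "f2 = e"
  proof (rule ex1_eq[OF bspec[OF orb eE]])
    show "f2 \<in> \<Lambda> \<and> (\<exists>w\<in>G\<^sub>R. w * f2 * minv w = e)" using u by blast
    show "e \<in> \<Lambda> \<and> (\<exists>w\<in>G\<^sub>R. w * e * minv w = e)" using assms(2) one_units minv_one
      by (intro conjI bexI[of _ 1]) (simp_all add: minv_one)
  qed
  then have uee: "u * e * minv u = e" using u(6) by simp
  have uWc: "u \<in> Wc e"
  proof -
    have "u * e = u * e * minv u * u" using minv(2)[OF u(1)] by (simp add: mult.assoc)
    also have "\<dots> = e * u" using uee by simp
    finally show ?thesis unfolding Wc_def using u(1) by simp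
  qed
  define E' where "E' = wi * e * w"
  define h0 where "h0 = E' * f"
  have e'E: "E' \<in> idems" unfolding E'_def using conj_idem[OF wiG eE] mwi by simp
  have E'E': "E' * E' = E'" using e'E unfolding idems_def by simp
  have c2: "E' * f = f * E'" using comm[OF e'E fE] .
  have h0E: "h0 \<in> idems" and h0le: "ileq h0 f"
  proof -
    have "h0 * h0 = E' * (f * E') * f" unfolding h0_def by (simp only: mult.assoc)
    also have "\<dots> = E' * (E' * f) * f" by (simp only: c2)
    also have "\<dots> = (E' * E') * (f * f)" by (simp only: mult.assoc)
    also have "\<dots> = h0" unfolding h0_def by (simp only: E'E' ff)
    finally show "h0 \<in> idems" unfolding idems_def by simp
    have "h0 * f = E' * (f * f)" unfolding h0_def by (simp only: mult.assoc)
    then have 1: "h0 * f = h0" unfolding h0_def by (simp only: ff)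
    have "f * h0 = (f * E') * f" unfolding h0_def by (simp only: mult.assoc)
    also have "\<dots> = E' * (f * f)" by (simp only: c2[symmetric] mult.assoc)
    also have "\<dots> = h0" unfolding h0_def by (simp only: ff)
    finally show "ileq h0 f" unfolding ileq_def using 1 by simp
  qed
  obtain v k1 k2 where v: "v \<in> G\<^sub>R" "k1 \<in> \<Lambda>" "k2 \<in> \<Lambda>" "ileq k1 k2"
      "v * k1 * minv v = h0" "v * k2 * minv v = f"
    using mp[OF bspec[OF bspec[OF E4 h0E] fE] h0le] by blast
  have "k2 = f"
  proof (rule ex1_eq[OF bspec[OF orb fE]])
    show "k2 \<in> \<Lambda> \<and> (\<exists>w\<in>G\<^sub>R. w * k2 * minv w = f)" using v by blast
    show "f \<in> \<Lambda> \<and> (\<exists>w\<in>G\<^sub>R. w * f * minv w = f)" using assms(3) one_units minv_one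
      by (intro conjI bexI[of _ 1]) (simp_all add: minv_one)
  qed
  then have vff: "v * f * minv v = f" using v(6) by simp
  have vWc: "v \<in> Wc f"
  proof -
    have "v * f = v * f * minv v * v" using minv(2)[OF v(1)] by (simp add: mult.assoc)
    also have "\<dots> = f * v" using vff by simp
    finally show ?thesis unfolding Wc_def using v(1) by simp
  qed
  have g_h0: "w * h0 * wi = g" unfolding g_def h0_def E'_def F_def wi_def using minv_r[OF wG] by (simp add: mult.assoc)
  have wvG: "w * v \<in> G\<^sub>R" using units_mult[OF wG v(1)] .
  have wvk1: "(w * v) * k1 * minv (w * v) = g"
  proof -
    have "(w * v) * k1 * minv (w * v) = w * (v * k1 * minv v) * wi"
      unfolding minv_mult[OF wG v(1)] wi_def by (simp add: mult.assoc)
    then show ?thesis using v(5) g_h0 by simp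
  qed
  have "k1 = f1"
  proof (rule ex1_eq[OF bspec[OF orb gE]])
    show "k1 \<in> \<Lambda> \<and> (\<exists>w\<in>G\<^sub>R. w * k1 * minv w = g)" using v(2) wvk1 wvG by blast
    show "f1 \<in> \<Lambda> \<and> (\<exists>w\<in>G\<^sub>R. w * f1 * minv w = g)" using u by blast
  qed
  define k where "k = f1"
  have kL: "k \<in> \<Lambda>" unfolding k_def using u(2) .
  have kle: "ileq k e" unfolding k_def using u(4) \<open>f2 = e\<close> by simp
  have h0k: "v * k * minv v = h0" unfolding k_def using v(5) \<open>k1 = f1\<close> by simp
  have ukg: "u * k * minv u = g" unfolding k_def using u(5) .
  define x where "x = minv u * (w * v)"
  have xk: "x * k = k * x" unfolding x_def
    by (rule conj_comm[OF u(1) wvG]) (use ukg wvk1 \<open>k1 = f1\<close> k_def in simp)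
  have xG: "x \<in> G\<^sub>R" unfolding x_def using units_mult[OF minv_units[OF u(1)] wvG] .
  have xWc: "x \<in> Wc k" unfolding Wc_def using xG xk by simp
  obtain L where L: "L \<subseteq> S" "Wc k = WI L" using bspec[OF E5 kL] by blast
  obtain K where K: "K \<subseteq> S" "Wstar k = WI K" using bspec[OF E5 kL] by blast
  obtain xs where xs: "xs \<in> lists L" "x = prod_list xs" using xWc L(2) unfolding WI_def by blast
  have letters: "\<forall>s\<in>set xs. s \<in> Wc e \<inter> Wc k \<or> s \<in> Wstar k"
  proof
    fix s assume "s \<in> set xs"
    then have sL: "s \<in> L" using xs(1) by auto
    then have sWc: "s \<in> Wc k" using L(2) WI_gen by simp
    have sS: "s \<in> S" using sL L(1) by auto
    show "s \<in> Wc e \<inter> Wc k \<or> s \<in> Wstar k"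
    proof (cases "s * k = k")
      case True
      then show ?thesis using sWc unfolding Wc_def Wstar_def by auto
    next
      case False
      then have "s \<in> lambda_star S k" unfolding lambda_star_def using sS sWc unfolding Wc_def by auto
      then have "s \<in> lambda_star S e" using mp[OF bspec[OF bspec[OF E6 kL] assms(2)] kle] by blast
      then have "s \<in> Wc e" unfolding lambda_star_def Wc_def using sS S_units by auto
      then show ?thesis using sWc by blast
    qed
  qed
  obtain b a where ba: "x = b * a" "b \<in> Wc e \<inter> Wc k" "a \<in> Wstar k"
    using decomp[OF letters] xs(2) by blast
  have bG: "b \<in> G\<^sub>R" using ba(2) unfolding Wc_def by auto
  define c where "c = minv b * minv u"
  have cI: "c \<in> WI I" unfolding c_def
    using Wc_mult[OF Wc_minv[of b e] Wc_minv[OF uWc]] ba(2) WcI by auto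
  have vJ: "v \<in> WI J" using vWc WcJ by simp
  have a_eq: "a = c * w * v"
  proof -
    have "a = minv b * x" using ba(1) minv_l[OF bG] by simp
    then show ?thesis unfolding x_def c_def by (simp add: mult.assoc)
  qed
  obtain P Q Wd where PQ: "P \<in> lists I" "Q \<in> lists J" "Wd \<in> lists S" "prod_list Wd = w"
      "prod_list (P @ Wd @ Q) = c * w * v" "length (P @ Wd @ Q) = cox_len S (c * w * v)"
    using deodhar[OF IS JS wG mini' cI vJ] by blast
  have LS: "P @ Wd @ Q \<in> lists S" using PQ(3) lists_sub[OF IS PQ(1)] lists_sub[OF JS PQ(2)] by simp
  have aK: "prod_list (P @ Wd @ Q) \<in> WI K" using PQ(5) a_eq ba(3) K(2) by simp
  have setK: "set (P @ Wd @ Q) \<subseteq> K" using support[OF K(1) LS] PQ(5,6) aK by simp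
  have wstar: "w \<in> Wstar k" using PQ(4) prod_in_WI[of Wd K] setK K(2) by (auto simp: lists_eq_set)
  define p where "p = prod_list P"
  define q where "q = prod_list Q"
  have pI: "p \<in> Wc e" unfolding p_def using prod_in_WI[OF PQ(1)] WcI by simp
  have qJ: "q \<in> Wc f" unfolding q_def using prod_in_WI[OF PQ(2)] WcJ by simp
  have qK: "q \<in> Wstar k" unfolding q_def using prod_in_WI[of Q K] setK K(2) by (auto simp: lists_eq_set)
  have a_pwq: "a = p * w * q" using PQ(4,5) a_eq unfolding p_def q_def by (simp add: mult.assoc)
  have cG: "c \<in> G\<^sub>R" by (rule subsetD[OF WI_units[OF IS] cI])
  have pG: "p \<in> G\<^sub>R" and qG: "q \<in> G\<^sub>R" using pI qJ unfolding Wc_def by auto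
  have cWc: "c \<in> Wc e" using cI WcI by simp
  define phi where "phi = (\<lambda>y. minv y * e * y * f)"
  have phi_lem: "phi (p' * y * q') = minv q' * phi y * q'"
    if "p' \<in> Wc e" "q' \<in> Wc f" "y \<in> G\<^sub>R" for p' q' y
  proof -
    have p'G: "p' \<in> G\<^sub>R" and p'e: "p' * e = e * p'" using that(1) unfolding Wc_def by auto
    have q'G: "q' \<in> G\<^sub>R" and q'f: "q' * f = f * q'" using that(2) unfolding Wc_def by auto
    have mp': "minv p' * (e * (p' * z)) = e * z" for z
    proof -
      have "minv p' * (e * (p' * z)) = minv p' * ((e * p') * z)" by (simp only: mult.assoc)
      also have "\<dots> = minv p' * (p' * (e * z))" by (simp only: p'e[symmetric] mult.assoc)
      also have "\<dots> = e * z" by (rule minv_l[OF p'G])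
      finally show ?thesis .
    qed
    have mi: "minv (p' * y * q') = minv q' * minv y * minv p'"
      using minv_mult[OF units_mult[OF p'G that(3)] q'G] minv_mult[OF p'G that(3)] by (simp add: mult.assoc)
    show ?thesis unfolding phi_def mi using mp' q'f by (simp add: mult.assoc)
  qed
  have phiw: "phi w = h0" unfolding phi_def h0_def E'_def wi_def ..
  have "phi a = minv v * h0 * v" using phi_lem[OF cWc vWc wG] a_eq phiw by simp
  also have "\<dots> = k" by (simp add: h0k[symmetric] mult.assoc minv_l[OF v(1)] minv(2)[OF v(1)])
  finally have phia: "phi a = k" .
  have "phi a = minv q * h0 * q" using phi_lem[OF pI qJ wG] a_pwq phiw by simp
  then have "minv q * h0 * q = k" using phia by simp
  then have "q * (minv q * h0 * q) * minv q = q * k * minv q" by simp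
  then have "h0 = q * k * minv q" using minv_r[OF qG] minv[OF qG] by (simp add: mult.assoc)
  moreover have "q * k = k" using qK unfolding Wstar_def by simp
  moreover have "k * minv q = k"
  proof -
    have "k * q = k" using qK unfolding Wstar_def by simp
    then have "k * q * minv q = k * minv q" by simp
    then show ?thesis using minv(1)[OF qG] by (simp add: mult.assoc)
  qed
  ultimately have h0k': "h0 = k" by (simp add: mult.assoc)
  have ewf: "e * w * f = w * h0" unfolding h0_def E'_def wi_def using minv_r[OF wG] by (simp add: mult.assoc)
  show ?thesis
  proof
    show "\<exists>h\<in>\<Lambda>. w \<in> Wc h \<and> e * w * f = w * h"
      using kL Wstar_Wc[OF wstar] ewf h0k' by blast
    show "\<forall>h\<in>\<Lambda>. w \<in> Wc h \<and> e * w * f = w * h \<longrightarrow> w \<in> Wstar h \<and> w * h = h"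
    proof (intro ballI impI)
      fix h assume "h \<in> \<Lambda>" "w \<in> Wc h \<and> e * w * f = w * h"
      then have "w * h = w * h0" using ewf by simp
      then have "h = k" using cancel_left[OF wG] h0k' by simp
      then show "w \<in> Wstar h \<and> w * h = h" using wstar unfolding Wstar_def by simp
    qed
  qed
qed

end
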